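(* For all $n,m\in\mathbb{N}$, \[ \sum_{j=0}^{n}\sum_{i=0}^{j}\frac{\binom{2n+3+m}{i}}{\binom{2n+1}{j}}=2^{m}(n+1)\left(H_{n+1}-\sum_{k=1}^{m}\frac{1}{2^{k-1}k}\left(\frac{\binom{2n+2+k}{n+1}}{\binom{2n+2}{n+1}}-1\right)\right). \]
   Context: $H_n=\sum_{k=1}^{n}\frac1k$ is the $n$-th harmonic number. Empty sums are $0$. *)

theory Defs
  imports "HOL-Analysis.Analysis"
begin

end

theory Submission
  imports Defs
begin


definition PS :: "nat \<Rightarrow> nat \<Rightarrow> nat" where "PS M j = (\<Sum>i=0..j. M choose i)"
definition RR :: "nat \<Rightarrow> nat \<Rightarrow> real" where "RR N j = real (PS N j) / real (N choose j)"

lemma choose_step: "Suc k * (n choose Suc k) = (n - k) * (n choose k)"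
  using binomial_absorption[of k n] binomial_absorb_comp[of n k] by simp

lemma pascal_PS: "PS (Suc M) j + (M choose j) = 2 * PS M j"
proof (induction j)
  case 0 then show ?case by (simp add: PS_def)
next
  case (Suc j)
  have "PS (Suc M) (Suc j) = PS (Suc M) j + (M choose j) + (M choose Suc j)"
    by (simp add: PS_def)
  moreover have "PS M (Suc j) = PS M j + (M choose Suc j)" by (simp add: PS_def)
  ultimately show ?case using Suc by simp
qed

lemma RR_rec:
  assumes "Suc k \<le> N"
  shows "(real N - real k) * RR N (Suc k) = (real N - real k) + real (Suc k) * RR N k"
proof -
  have c0: "real (N choose k) > 0" using assms by simp
  have c1: "real (N choose Suc k) > 0" using assms by simp
  have st: "real (Suc k) * real (N choose Suc k) = (real N - real k) * real (N choose k)"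
  proof -
    have "real (Suc k) * real (N choose Suc k) = real (N - k) * real (N choose k)"
      using arg_cong[OF choose_step[of k N], of real] by (simp only: of_nat_mult)
    moreover have "real (N - k) = real N - real k" using assms by (simp add: of_nat_diff)
    ultimately show ?thesis by simp
  qed
  have ps: "real (PS N (Suc k)) = real (PS N k) + real (N choose Suc k)" by (simp add: PS_def)
  have "(real N - real k) * RR N (Suc k) = (real N - real k) * (real (PS N k) + real (N choose Suc k)) / real (N choose Suc k)"
    by (simp add: RR_def ps)
  also have "\<dots> = (real N - real k) + (real N - real k) * real (PS N k) / real (N choose Suc k)"
    using c1 by (simp add: field_simps)
  also have "(real N - real k) * real (PS N k) / real (N choose Suc k) = real (Suc k) * RR N k"
  proof -
    have c1v: "real (N choose Suc k) = (real N - real k) * real (N choose k) / real (Suc k)"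
      using st by (simp add: field_simps)
    have nk: "real N - real k > 0" using assms by simp
    show ?thesis unfolding RR_def c1v using c0 nk by (simp add: field_simps)
  qed
  finally show ?thesis .
qed

lemma weighted:
  assumes "r \<le> N"
  shows "(\<Sum>j=0..r. (w j * (real N + 1 - real j) - w (Suc j) * real (Suc j)) * RR N j)
       = (\<Sum>j=0..r. w j * (real N + 1 - real j)) - w (Suc r) * real (Suc r) * RR N r"
  using assms
proof (induction r)
  case 0 then show ?case by (simp add: RR_def PS_def algebra_simps)
next
  case (Suc r)
  have rec: "(real N - real r) * RR N (Suc r) = (real N - real r) + real (Suc r) * RR N r"
    using RR_rec Suc.prems by blast
  have IH: "(\<Sum>j=0..r. (w j * (real N + 1 - real j) - w (Suc j) * real (Suc j)) * RR N j)
       = (\<Sum>j=0..r. w j * (real N + 1 - real j)) - w (Suc r) * real (Suc r) * RR N r"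
    using Suc by simp
  have rec2: "w (Suc r) * ((real N - real r) * RR N (Suc r)) = w (Suc r) * ((real N - real r) + real (Suc r) * RR N r)"
    using rec by simp
  have e: "real N + 1 - real (Suc r) = real N - real r" by simp
  have d: "(w (Suc r) * (real N - real r) - w (Suc (Suc r)) * real (Suc (Suc r))) * RR N (Suc r)
     = w (Suc r) * ((real N - real r) * RR N (Suc r)) - w (Suc (Suc r)) * real (Suc (Suc r)) * RR N (Suc r)"
    by (simp add: algebra_simps)
  have d2: "w (Suc r) * ((real N - real r) + real (Suc r) * RR N r) = w (Suc r) * (real N - real r) + w (Suc r) * real (Suc r) * RR N r"
    by (simp add: algebra_simps)
  show ?case unfolding sum.atLeast0_atMost_Suc IH e d using rec2 d2 by linarith
qed

lemma PS2: "PS (Suc (Suc N)) j + 2 * (N choose j) + (Suc N choose j) = 4 * PS N j"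
  using pascal_PS[of "Suc N" j] pascal_PS[of N j] by linarith

lemma aux:
  fixes a b c M1 M2 p p2 c1 c2 :: real
  assumes "c > 0" "a > 0" "b > 0" "M1 > 0" "M2 > 0"
    "c1 = M1 * c / a" "c2 = M2 * M1 * c / (a * b)" "p2 = 4 * p - 2 * c - c1"
  shows "p2 / c2 = (a * b * (4 * (p / c) - 2) - M1 * b) / (M1 * M2)"
proof -
  have ca: "c1 * a = M1 * c" using assms(2,6) by simp
  have "p2 * a = (4 * p - 2 * c) * a - c1 * a" unfolding assms(8) by (simp add: algebra_simps)
  then have "p2 * a = (4 * p - 2 * c) * a - M1 * c" using ca by simp
  then have e: "p2 * (a * b) = ((4 * p - 2 * c) * a - M1 * c) * b" by (metis mult.assoc)
  have "p2 / c2 = p2 * (a * b) / (M2 * M1 * c)" unfolding assms(7) by (simp only: divide_divide_eq_right)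
  also have "\<dots> = ((4 * p - 2 * c) * a - M1 * c) * b / (M2 * M1 * c)" by (simp add: e)
  also have "\<dots> = (a * b * (4 * (p / c) - 2) - M1 * b) / (M1 * M2)" using assms by (simp add: field_simps)
  finally show ?thesis .
qed
lemma RR2:
  assumes "j \<le> N"
  shows "RR (Suc (Suc N)) j = ((real N + 1 - real j) * (real N + 2 - real j) * (4 * RR N j - 2)
           - (real N + 1) * (real N + 2 - real j)) / ((real N + 1) * (real N + 2))"
proof -
  define c where "c = real (N choose j)"
  define c1 where "c1 = real (Suc N choose j)"
  define c2 where "c2 = real (Suc (Suc N) choose j)"
  define p where "p = real (PS N j)"
  define p2 where "p2 = real (PS (Suc (Suc N)) j)"
  have cpos: "c > 0" using assms by (simp add: c_def)
  have b: "(Suc N - j) * (Suc N choose j) = Suc N * (N choose j)"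
    using binomial_absorb_comp[of "Suc N" j] by (simp only: diff_Suc_1)
  have b2: "real (Suc N - j) * c1 = real (Suc N) * c" unfolding c_def c1_def
    using arg_cong[OF b, of real] by (simp only: of_nat_mult)
  have b3: "real (Suc N - j) = real N + 1 - real j" using assms by (simp add: of_nat_diff)
  have a1: "(real N + 1 - real j) * c1 = (real N + 1) * c"
    using b2 b3 by simp
  have bb: "(Suc (Suc N) - j) * (Suc (Suc N) choose j) = Suc (Suc N) * (Suc N choose j)"
    using binomial_absorb_comp[of "Suc (Suc N)" j] by (simp only: diff_Suc_1)
  have bb2: "real (Suc (Suc N) - j) * c2 = real (Suc (Suc N)) * c1" unfolding c2_def c1_def
    using arg_cong[OF bb, of real] by (simp only: of_nat_mult)
  have bb3: "real (Suc (Suc N) - j) = real N + 2 - real j" using assms by (simp add: of_nat_diff)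
  have a2: "(real N + 2 - real j) * c2 = (real N + 2) * c1"
    using bb2 bb3 by simp
  have e: "p2 + 2 * c + c1 = 4 * p"
    using arg_cong[OF PS2[of N j], of real] unfolding p2_def c_def c1_def p_def by simp
  have j1: "real N + 1 - real j > 0" "real N + 2 - real j > 0" using assms by auto
  have c1v: "c1 = (real N + 1) * c / (real N + 1 - real j)" using a1 j1 by (simp add: field_simps)
  have c2v: "c2 = (real N + 2) * (real N + 1) * c / ((real N + 1 - real j) * (real N + 2 - real j))"
  proof -
    have c2v0: "c2 = (real N + 2) * c1 / (real N + 2 - real j)" using a2 j1 by (simp add: field_simps)
    show ?thesis unfolding c2v0 c1v using j1 by simp
  qed
  have p2v: "p2 = 4 * p - 2 * c - c1" using e by simp
  have "RR (Suc (Suc N)) j = p2 / c2" by (simp add: RR_def p2_def c2_def)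
  also have "\<dots> = ((real N + 1 - real j) * (real N + 2 - real j) * (4 * (p / c) - 2)
           - (real N + 1) * (real N + 2 - real j)) / ((real N + 1) * (real N + 2))"
    by (rule aux[OF cpos j1(1) j1(2) _ _ c1v _ p2v]) (simp_all add: c2v algebra_simps)
  also have "p / c = RR N j" by (simp add: RR_def p_def c_def)
  finally show ?thesis .
qed

lemma sum_lin: "(\<Sum>j=0..n. (a::real) - 2 * real j) = real (Suc n) * a - real n * real (Suc n)"
  by (induction n) (auto simp: algebra_simps)

lemma U_step:
  fixes n :: nat
  defines "N \<equiv> 2*n+1"
  shows "(real N + 1) * (real N + 2) * (\<Sum>j=0..Suc n. RR (Suc (Suc N)) j)
       = (real N + 2) * (real N + 3) * (\<Sum>j=0..n. RR N j) + real (Suc n) * real (n+2)"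
proof -
  define R where "R = RR N"
  define w where "w = (\<lambda>j::nat. 3 * real N + 7 - 2 * real j)"
  define G where "G = (\<lambda>j::nat. (real N + 1 - real j) * (real N + 2 - real j) * (4 * R j - 2)
           - (real N + 1) * (real N + 2 - real j))"
  define C where "C = (\<lambda>j::nat. (w j * (real N + 1 - real j) - w (Suc j) * real (Suc j)) * R j)"
  define H where "H = (\<lambda>j::nat. 2 * (real N + 1 - real j) * (real N + 2 - real j) + (real N + 1) * (real N + 2 - real j))"
  define W where "W = (\<lambda>j::nat. w j * (real N + 1 - real j))"
  have pos: "(real N + 1) * (real N + 2) > 0" by simp
  have s1: "(real N + 1) * (real N + 2) * (\<Sum>j=0..Suc n. RR (Suc (Suc N)) j)
      = (\<Sum>j=0..Suc n. (real N + 1) * (real N + 2) * RR (Suc (Suc N)) j)"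
    by (rule sum_distrib_left)
  have s2: "(\<Sum>j=0..Suc n. (real N + 1) * (real N + 2) * RR (Suc (Suc N)) j) = (\<Sum>j=0..Suc n. G j)"
  proof (rule sum.cong[OF refl])
    fix j assume "j \<in> {0..Suc n}"
    then have "j \<le> N" by (simp add: N_def)
    then show "(real N + 1) * (real N + 2) * RR (Suc (Suc N)) j = G j"
      unfolding RR2[OF \<open>j \<le> N\<close>] G_def R_def using pos by (simp add: field_simps)
  qed
  have s3: "(\<Sum>j=0..Suc n. G j) = (\<Sum>j=0..n. G j) + G (Suc n)" by simp
  have gp: "G j = C j + (real N + 2) * (real N + 3) * R j - H j" for j
    unfolding G_def C_def H_def w_def by (simp add: algebra_simps)
  have s4: "(\<Sum>j=0..n. G j) = (\<Sum>j=0..n. C j) + (real N + 2) * (real N + 3) * (\<Sum>j=0..n. R j) - (\<Sum>j=0..n. H j)"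
    unfolding gp by (simp add: sum.distrib sum_subtractf sum_distrib_left)
  have s5: "(\<Sum>j=0..n. C j) = (\<Sum>j=0..n. W j) - w (Suc n) * real (Suc n) * R n"
    unfolding C_def W_def R_def by (rule weighted) (simp add: N_def)
  have s6: "G (Suc n) = 4 * real (Suc n) * real (n+2) * R n"
  proof -
    have "(real N - real n) * RR N (Suc n) = (real N - real n) + real (Suc n) * RR N n"
      by (rule RR_rec) (simp add: N_def)
    moreover have "real N - real n = real (Suc n)" by (simp add: N_def)
    ultimately have "real (Suc n) * R (Suc n) = real (Suc n) * (1 + R n)" unfolding R_def
      by (simp add: algebra_simps)
    then have "R (Suc n) = 1 + R n" by simp
    then show ?thesis by (simp add: G_def N_def algebra_simps)
  qed
  have s7: "w (Suc n) * real (Suc n) * R n = 4 * real (Suc n) * real (n+2) * R n"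
    by (simp add: w_def N_def algebra_simps)
  have wh: "W j - H j = (real N + 1) - 2 * real j" for j
    unfolding W_def H_def w_def by (simp add: algebra_simps)
  have s8: "(\<Sum>j=0..n. W j) - (\<Sum>j=0..n. H j) = (\<Sum>j=0..n. (real N + 1) - 2 * real j)"
    unfolding sum_subtractf[symmetric] wh by simp
  have s9: "(\<Sum>j=0..n. (real N + 1) - 2 * real j) = real (Suc n) * real (n+2)"
    unfolding sum_lin by (simp add: N_def algebra_simps)
  show ?thesis using s1 s2 s3 s4 s5 s6 s7 s8 s9 unfolding R_def by linarith
qed

lemma U_formula:
  "(\<Sum>j=0..n. RR (2*n+1) j) = real (Suc n) * (2 + 2 * harm (2*n+2) - harm (n+1)) / 4"
proof (induction n)
  case 0
  show ?case by (simp add: RR_def PS_def harm_def)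
next
  case (Suc n)
  define N where "N = 2*n+1"
  have st: "(real N + 1) * (real N + 2) * (\<Sum>j=0..Suc n. RR (Suc (Suc N)) j)
       = (real N + 2) * (real N + 3) * (\<Sum>j=0..n. RR N j) + real (Suc n) * real (n+2)"
    unfolding N_def by (rule U_step)
  have e1: "2 * Suc n + 1 = Suc (Suc N)" by (simp add: N_def)
  have h1: "harm (2 * Suc n + 2) = harm (2*n+2) + 1 / (2 * real n + 3) + 1 / (2 * real n + 4)"
  proof -
    have "2 * Suc n + 2 = Suc (Suc (2*n+2))" by simp
    then show ?thesis by (simp add: harm_Suc inverse_eq_divide algebra_simps)
  qed
  have h2: "harm (Suc n + 1) = harm (n+1) + 1 / (real n + 2)"
    by (simp add: harm_Suc inverse_eq_divide algebra_simps)
  define U where "U = (\<Sum>j=0..n. RR N j)"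
  define U' where "U' = (\<Sum>j=0..Suc n. RR (Suc (Suc N)) j)"
  have IH: "U = real (Suc n) * (2 + 2 * harm (2*n+2) - harm (n+1)) / 4"
    using Suc.IH by (simp add: U_def N_def)
  have st': "(2 * real n + 2) * (2 * real n + 3) * U' = (2 * real n + 3) * (2 * real n + 4) * U + (real n + 1) * (real n + 2)"
    using st by (simp add: U_def U'_def N_def algebra_simps)
  define V where "V = 2 + 2 * harm (2*n+2) - (harm (n+1) :: real)"
  have IH': "U = (real n + 1) * V / 4" using IH by (simp add: V_def)
  have Y: "(2 * real n + 2) * (2 * real n + 3) \<noteq> 0" by (simp add: add_pos_pos)
  have U'v: "U' = ((2 * real n + 3) * (2 * real n + 4) * U + (real n + 1) * (real n + 2)) / ((2 * real n + 2) * (2 * real n + 3))"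
    using st' Y by (simp add: nonzero_eq_divide_eq mult.commute)
  have U'v2: "U' = (real n + 2) * V / 4 + (real n + 2) / (2 * (2 * real n + 3))"
  proof -
    have p1: "2 * real n + 2 > 0" "2 * real n + 3 > 0" "real n + 1 > 0" by auto
    show ?thesis unfolding U'v IH' using p1
      by (simp add: divide_simps) (simp add: algebra_simps)
  qed
  have fin: "U' = (real n + 2) * (2 + 2 * (harm (2*n+2) + 1 / (2 * real n + 3) + 1 / (2 * real n + 4)) - (harm (n+1) + 1 / (real n + 2))) / 4"
  proof -
    have E: "2 + 2 * (harm (2*n+2) + 1 / (2 * real n + 3) + 1 / (2 * real n + 4)) - (harm (n+1) + 1 / (real n + 2))
        = V + 2 / (2 * real n + 3)"
    proof -
      have p1: "2 * real n + 4 > 0" "2 * real n + 3 > 0" "real n + 2 > 0" by auto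
      have q: "2 * real n + 4 = 2 * (real n + 2)" by simp
      have "2 * (1 / (2 * real n + 4)) - 1 / (real n + 2) = 0" unfolding q using p1 by (simp add: field_simps)
      then show ?thesis unfolding V_def by (simp add: algebra_simps)
    qed
    have p3: "2 * real n + 3 > 0" by simp
    show ?thesis unfolding E U'v2 using p3 by (simp add: field_simps)
  qed
  have r: "real (Suc (Suc n)) = real n + 2" by simp
  show ?case unfolding e1 h1 h2 U'_def[symmetric] r by (rule fin)
qed

lemma harm_tail: "(\<Sum>j=0..k. 1 / (real (a+k+1) - real j)) = harm (a+k+1) - (harm a :: real)"
proof (induction k)
  case 0 then show ?case by (simp add: harm_Suc inverse_eq_divide)
next
  case (Suc k)
  have "(\<Sum>j=0..Suc k. 1 / (real (a+Suc k+1) - real j)) = 1 / real (a + Suc k + 1) + (\<Sum>j=0..k. 1 / (real (a+k+1) - real j))"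
    unfolding sum.atLeast0_atMost_Suc_shift by (simp add: algebra_simps)
  then show ?case using Suc by (simp add: harm_Suc inverse_eq_divide)
qed

lemma base_case:
  "(\<Sum>j=0..n. \<Sum>i=0..j. real ((2*n+3) choose i) / real ((2*n+1) choose j)) = real (n+1) * harm (n+1)"
proof -
  define N where "N = 2*n+1"
  have pt: "(\<Sum>i=0..j. real ((2*n+3) choose i) / real ((2*n+1) choose j)) = 4 * RR N j - 2 - (real N + 1) / (real N + 1 - real j)"
    if "j \<le> n" for j
  proof -
    have jN: "j \<le> N" using that by (simp add: N_def)
    define c where "c = real (N choose j)"
    define c1 where "c1 = real (Suc N choose j)"
    define p where "p = real (PS N j)"
    define p2 where "p2 = real (PS (Suc (Suc N)) j)"
    have cpos: "c > 0" using jN by (simp add: c_def)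
    have b: "(Suc N - j) * (Suc N choose j) = Suc N * (N choose j)"
      using binomial_absorb_comp[of "Suc N" j] by (simp only: diff_Suc_1)
    have b2: "real (Suc N - j) * c1 = real (Suc N) * c" unfolding c_def c1_def
      using arg_cong[OF b, of real] by (simp only: of_nat_mult)
    have b3: "real (Suc N - j) = real N + 1 - real j" using jN by (simp add: of_nat_diff)
    have a1: "(real N + 1 - real j) * c1 = (real N + 1) * c"
      using b2 b3 by simp
    have e: "p2 + 2 * c + c1 = 4 * p"
      using arg_cong[OF PS2[of N j], of real] unfolding p2_def c_def c1_def p_def by simp
    have j1: "real N + 1 - real j > 0" using jN by auto
    have c1v: "c1 = (real N + 1) * c / (real N + 1 - real j)" using a1 j1 by (simp add: field_simps)
    have "(\<Sum>i=0..j. real ((2*n+3) choose i) / real ((2*n+1) choose j)) = p2 / c"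
    proof -
      have e3: "2*n+3 = Suc (Suc N)" "2*n+1 = N" by (simp_all add: N_def)
      show ?thesis unfolding e3 sum_divide_distrib[symmetric] p2_def c_def PS_def by simp
    qed
    also have "\<dots> = 4 * (p / c) - 2 - (real N + 1) / (real N + 1 - real j)"
    proof -
      have p2v: "p2 = 4*p - 2*c - c1" using e by simp
      show ?thesis unfolding p2v c1v using cpos j1 by (simp add: field_simps)
    qed
    finally show ?thesis by (simp add: RR_def p_def c_def)
  qed
  define X where "X = (\<Sum>j=0..n. \<Sum>i=0..j. real ((2*n+3) choose i) / real ((2*n+1) choose j))"
  define U where "U = (\<Sum>j=0..n. RR N j)"
  define T where "T = (\<Sum>j=0..n. 1 / (real N + 1 - real j))"
  define A where "A = (harm (2*n+2) :: real)"
  define B where "B = (harm (n+1) :: real)"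
  have x1: "X = (\<Sum>j=0..n. 4 * RR N j - 2 - (real N + 1) / (real N + 1 - real j))"
    unfolding X_def by (rule sum.cong[OF refl]) (rule pt, simp)
  have x2: "(\<Sum>j=0..n. 4 * RR N j - 2 - (real N + 1) / (real N + 1 - real j)) = 4 * U - 2 * real (n+1) - (real N + 1) * T"
    unfolding U_def T_def by (simp add: sum_subtractf sum_distrib_left)
  have x3: "T = A - B"
  proof -
    have ht: "(\<Sum>j=0..n. 1 / (real (n+1+n+1) - real j)) = harm (n+1+n+1) - (harm (n+1) :: real)"
      by (rule harm_tail)
    have e5: "n+1+n+1 = 2*n+2" by simp
    have e6: "real (2*n+2) = real N + 1" by (simp add: N_def)
    show ?thesis using ht unfolding e5 e6 T_def A_def B_def .
  qed
  have x4: "U = real (Suc n) * (2 + 2 * A - B) / 4"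
    unfolding U_def A_def B_def N_def by (rule U_formula)
  have x5: "4 * U = real (Suc n) * (2 + 2 * A - B)" using x4 by simp
  have "X = real (n+1) * B" using x1 x2 x3 x5 by (simp add: N_def algebra_simps)
  then show ?thesis unfolding X_def B_def .
qed



lemma aux2:
  fixes u m1 n0 n1 a0 a1 kk :: real
  assumes "u > 0" "m1 > 0" "n0 > 0" "kk > 0"
    "a1 * kk = (u + m1 + 1) * a0" "n1 * kk = u * n0"
  shows "(u / m1) * (a1 / n1) - ((u + 1) / m1) * (a0 / n0) = a0 / n0"
proof -
  have a1v: "a1 = (u + m1 + 1) * a0 / kk" using assms(4,5) by (simp add: field_simps)
  have n1v: "n1 = u * n0 / kk" using assms(4,6) by (simp add: field_simps)
  have "a1 / n1 = (u + m1 + 1) * a0 / (u * n0)" unfolding a1v n1v using assms(4) by simp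
  then have "(u / m1) * (a1 / n1) = (u + m1 + 1) * a0 / (m1 * n0)" using assms(1,2,3) by (simp add: field_simps)
  then show ?thesis using assms(1,2,3) by (simp add: field_simps)
qed

lemma aux3:
  fixes a b c q :: real
  assumes "b > 0" "q > 0"
  shows "c / q * (a / b) - 2 * c / q = 2 * c / q * (a / (2 * b) - 1)"
  using assms by (simp add: field_simps)

lemma aux4:
  fixes p q c h G r :: real
  assumes "p > 0" "q > 0"
  shows "2 * (p * c * (h - G)) - 2 * c / q * (r - 1) = (2 * p) * c * (h - (G + 1 / (p * q) * (r - 1)))"
  using assms by (simp add: field_simps)

lemma T_partial:
  fixes n m r :: nat
  defines "A \<equiv> 2*n+3+m" and "N \<equiv> 2*n+1"
  assumes "r \<le> n"
  shows "(\<Sum>j=0..r. real (A choose j) / real (N choose j))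
       = (real N + 1 - real (Suc r)) / real (Suc m) * (real (A choose Suc r) / real (N choose Suc r))
         - (real N + 1) / real (Suc m)"
  using assms(3)
proof (induction r)
  case 0
  have Np: "real N > 0" by (simp add: N_def)
  have mp: "real (Suc m) > 0" by simp
  have "(real N + 1 - real (Suc 0)) / real (Suc m) * (real (A choose Suc 0) / real (N choose Suc 0))
      = real N / real (Suc m) * (real A / real N)" by simp
  also have "\<dots> = real A / real (Suc m)" using Np by simp
  finally have "(real N + 1 - real (Suc 0)) / real (Suc m) * (real (A choose Suc 0) / real (N choose Suc 0))
         - (real N + 1) / real (Suc m) = (real A - (real N + 1)) / real (Suc m)" by (simp add: diff_divide_distrib)
  also have "real A - (real N + 1) = real (Suc m)" by (simp add: A_def N_def)
  finally show ?case using mp by simp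
next
  case (Suc r)
  define k where "k = Suc r"
  have kn: "k \<le> n" using Suc.prems by (simp add: k_def)
  have IH: "(\<Sum>j=0..r. real (A choose j) / real (N choose j))
       = (real N + 1 - real k) / real (Suc m) * (real (A choose k) / real (N choose k))
         - (real N + 1) / real (Suc m)" using Suc by (simp add: k_def)
  define u where "u = real N - real k"
  have u: "u > 0" using kn by (simp add: u_def N_def)
  have n0: "real (N choose k) > 0" using kn by (simp add: N_def)
  have st1: "real (A choose Suc k) * real (Suc k) = (u + real (Suc m) + 1) * real (A choose k)"
  proof -
    have "real (Suc k) * real (A choose Suc k) = real (A - k) * real (A choose k)"
      using arg_cong[OF choose_step[of k A], of real] by (simp only: of_nat_mult)
    moreover have "real (A - k) = u + real (Suc m) + 1" using kn by (simp add: u_def A_def N_def of_nat_diff)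
    ultimately show ?thesis by (simp add: mult.commute)
  qed
  have st2: "real (N choose Suc k) * real (Suc k) = u * real (N choose k)"
  proof -
    have "real (Suc k) * real (N choose Suc k) = real (N - k) * real (N choose k)"
      using arg_cong[OF choose_step[of k N], of real] by (simp only: of_nat_mult)
    moreover have "real (N - k) = u" using kn by (simp add: u_def N_def of_nat_diff)
    ultimately show ?thesis by (simp add: mult.commute)
  qed
  have key: "(u / real (Suc m)) * (real (A choose Suc k) / real (N choose Suc k))
      - ((u + 1) / real (Suc m)) * (real (A choose k) / real (N choose k)) = real (A choose k) / real (N choose k)"
    by (rule aux2[OF u _ n0 _ st1 st2]) simp_all
  have e1: "real N + 1 - real (Suc k) = u" by (simp add: u_def)
  have e2: "real N + 1 - real k = u + 1" by (simp add: u_def)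
  have sp: "(\<Sum>j=0..Suc r. real (A choose j) / real (N choose j))
     = (\<Sum>j=0..r. real (A choose j) / real (N choose j)) + real (A choose k) / real (N choose k)"
    by (simp add: k_def)
  have IH': "(\<Sum>j=0..r. real (A choose j) / real (N choose j))
       = (u + 1) / real (Suc m) * (real (A choose k) / real (N choose k))
         - (real N + 1) / real (Suc m)" using IH unfolding e2 .
  have "(\<Sum>j=0..Suc r. real (A choose j) / real (N choose j))
     = (real N + 1 - real (Suc k)) / real (Suc m) * (real (A choose Suc k) / real (N choose Suc k))
         - (real N + 1) / real (Suc m)"
    unfolding sp IH' e1 using key by linarith
  then show ?case by (simp add: k_def)
qed

lemma T_formula:
  fixes n m :: nat
  shows "(\<Sum>j=0..n. real ((2*n+3+m) choose j) / real ((2*n+1) choose j))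
       = 2 * real (n+1) / real (m+1) * (real ((2*n+3+m) choose (n+1)) / real ((2*n+2) choose (n+1)) - 1)"
proof -
  have c2: "real ((2*n+2) choose (n+1)) = 2 * real ((2*n+1) choose (n+1))"
  proof -
    have ee: "2*n+2 = Suc (2*n+1)" "n+1 = Suc n" by simp_all
    have "(2*n+2) choose (n+1) = ((2*n+1) choose n) + ((2*n+1) choose (n+1))"
      unfolding ee by (rule binomial_Suc_Suc)
    moreover have "(2*n+1) choose n = (2*n+1) choose (n+1)"
      using binomial_symmetric[of n "2*n+1"] by simp
    ultimately show ?thesis by simp
  qed
  have pos0: "0 < (2*n+1) choose (n+1)" by (rule zero_less_binomial) simp
  have pos: "real ((2*n+1) choose (n+1)) > 0" using pos0 by (simp only: of_nat_0_less_iff)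
  have "(\<Sum>j=0..n. real ((2*n+3+m) choose j) / real ((2*n+1) choose j))
     = (real (2*n+1) + 1 - real (Suc n)) / real (Suc m) * (real ((2*n+3+m) choose Suc n) / real ((2*n+1) choose Suc n))
         - (real (2*n+1) + 1) / real (Suc m)"
    by (rule T_partial) simp
  also have "\<dots> = 2 * real (n+1) / real (m+1) * (real ((2*n+3+m) choose (n+1)) / real ((2*n+2) choose (n+1)) - 1)"
  proof -
    define a where "a = real ((2*n+3+m) choose (n+1))"
    define b where "b = real ((2*n+1) choose (n+1))"
    have e1: "real (2*n+1) + 1 - real (n+1) = real (n+1)" by simp
    have e2: "real (2*n+1) + 1 = 2 * real (n+1)" by simp
    have bp: "b > 0" using pos by (simp add: b_def)
    have qp: "real (m+1) > 0" by simp
    have main: "real (n+1) / real (m+1) * (a / b) - 2 * real (n+1) / real (m+1)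
        = 2 * real (n+1) / real (m+1) * (a / (2 * b) - 1)"
      by (rule aux3[OF bp qp])
    have e3: "2 * real (n+1) - real (n+1) = real (n+1)" by simp
    show ?thesis unfolding Suc_eq_plus1 e1 e2 e3 c2 a_def[symmetric] b_def[symmetric] by (rule main)
  qed
  finally show ?thesis .
qed

theorem mainTheorem7:
  fixes n m :: nat
  shows "(\<Sum>j=0..n. \<Sum>i=0..j. real ((2*n+3+m) choose i) / real ((2*n+1) choose j))
       = 2^m * real (n+1) * (harm (n+1)
           - (\<Sum>k=1..m. 1 / (2^(k-1) * real k) *
               (real ((2*n+2+k) choose (n+1)) / real ((2*n+2) choose (n+1)) - 1)))"
proof (induction m)
  case 0
  show ?case using base_case[of n] by simp
next
  case (Suc m)
  define M where "M = 2*n+3+m"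
  define L where "L = (\<lambda>m. (\<Sum>j=0..n. \<Sum>i=0..j. real ((2*n+3+m) choose i) / real ((2*n+1) choose j)))"
  define G where "G = (\<Sum>k=1..m. 1 / (2^(k-1) * real k) *
               (real ((2*n+2+k) choose (n+1)) / real ((2*n+2) choose (n+1)) - (1::real)))"
  define \<rho> where "\<rho> = real (M choose (n+1)) / real ((2*n+2) choose (n+1))"
  define T where "T = (\<Sum>j=0..n. real (M choose j) / real ((2*n+1) choose j))"
  have IH: "L m = 2^m * real (n+1) * (harm (n+1) - G)" using Suc.IH by (simp add: L_def G_def)
  have rec: "L (Suc m) = 2 * L m - T"
  proof -
    have pt: "(\<Sum>i=0..j. real ((2*n+3+Suc m) choose i) / real ((2*n+1) choose j))
       = 2 * (\<Sum>i=0..j. real ((2*n+3+m) choose i) / real ((2*n+1) choose j)) - real (M choose j) / real ((2*n+1) choose j)" for j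
    proof -
      have e: "2*n+3+Suc m = Suc M" by (simp add: M_def)
      have "real (PS (Suc M) j) + real (M choose j) = 2 * real (PS M j)"
        using arg_cong[OF pascal_PS[of M j], of real] by simp
      then have "(\<Sum>i=0..j. real (Suc M choose i)) = 2 * (\<Sum>i=0..j. real (M choose i)) - real (M choose j)"
        unfolding PS_def by simp
      then show ?thesis unfolding e sum_divide_distrib[symmetric] M_def by (simp add: diff_divide_distrib)
    qed
    show ?thesis unfolding L_def T_def pt by (simp add: sum_subtractf sum_distrib_left)
  qed
  have Tf: "T = 2 * real (n+1) / real (m+1) * (\<rho> - 1)"
    unfolding T_def \<rho>_def M_def by (rule T_formula)
  have GS: "(\<Sum>k=1..Suc m. 1 / (2^(k-1) * real k) *
               (real ((2*n+2+k) choose (n+1)) / real ((2*n+2) choose (n+1)) - (1::real)))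
       = G + 1 / (2^m * real (Suc m)) * (\<rho> - 1)"
  proof -
    have e: "2*n+2+Suc m = M" by (simp add: M_def)
    define F where "F = (\<lambda>k. 1 / (2^(k-1) * real k) *
               (real ((2*n+2+k) choose (n+1)) / real ((2*n+2) choose (n+1)) - (1::real)))"
    have sp: "(\<Sum>k=1..Suc m. F k) = (\<Sum>k=1..m. F k) + F (Suc m)"
      by (rule sum.cl_ivl_Suc[THEN trans]) simp
    have fs: "F (Suc m) = 1 / (2^m * real (Suc m)) * (\<rho> - 1)"
      unfolding F_def \<rho>_def by (simp only: e diff_Suc_1)
    show ?thesis using sp unfolding fs unfolding F_def G_def .
  qed
  have p: "(2::real)^m > 0" by simp
  have fin: "L (Suc m) = 2^(Suc m) * real (n+1) * (harm (n+1) - (G + 1 / (2^m * real (Suc m)) * (\<rho> - 1)))"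
  proof -
    have "L (Suc m) = 2 * (2^m * real (n+1) * (harm (n+1) - G)) - 2 * real (n+1) / real (m+1) * (\<rho> - 1)"
      unfolding rec IH Tf ..
    also have "\<dots> = 2^(Suc m) * real (n+1) * (harm (n+1) - (G + 1 / (2^m * real (Suc m)) * (\<rho> - 1)))"
    proof -
      have qq: "real (Suc m) > 0" by simp
      have "2 * (2^m * real (n+1) * (harm (n+1) - G)) - 2 * real (n+1) / real (Suc m) * (\<rho> - 1)
          = (2 * 2^m) * real (n+1) * (harm (n+1) - (G + 1 / (2^m * real (Suc m)) * (\<rho> - 1)))"
        by (rule aux4[OF p qq])
      then show ?thesis unfolding Suc_eq_plus1[symmetric] power_Suc .
    qed
    finally show ?thesis .
  qed
  show ?case unfolding GS using fin by (simp add: L_def)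
qed

end
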